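(* Let $\mathcal U$ be a non-principal ultrafilter on $\mathbb N$ and let $\mathcal A$ be a unital Banach algebra such that the ultrapower $(\mathcal A)_{\mathcal U}$ is purely infinite. Then $\mathcal A$ is purely infinite.
   Context: A complex unital algebra $\mathcal B$ is purely infinite if it is not a division algebra and for every non-zero $a\in\mathcal B$ there exist $b,c\in\mathcal B$ with $bac=1_{\mathcal B}$. For an ultrafilter $\mathcal U$ on $\mathbb N$, the ultrapower is $(\mathcal A)_{\mathcal U}=\ell^\infty(\mathcal A)/c_{\mathcal U}(\mathcal A)$, where $\ell^\infty(\mathcal A)$ is the Banach algebra of bounded sequences in $\mathcal A$ with pointwise operations and sup norm, and $c_{\mathcal U}(\mathcal A)$ is the closed ideal of sequences $(a_n)$ with $\lim_{n\to\mathcal U}\|a_n\|=0$. *)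

theory Defs
  imports "HOL-Analysis.Analysis" "HOL-Algebra.QuotRing"
begin

class complex_banach_algebra_1 = banach + real_normed_algebra_1 +
  fixes scaleC :: "complex \<Rightarrow> 'a \<Rightarrow> 'a"
  assumes scaleC_add_right: "scaleC a (x + y) = scaleC a x + scaleC a y"
    and scaleC_add_left: "scaleC (a + b) x = scaleC a x + scaleC b x"
    and scaleC_scaleC: "scaleC a (scaleC b x) = scaleC (a * b) x"
    and scaleC_one: "scaleC 1 x = x"
    and scaleC_of_real: "scaleC (complex_of_real r) x = scaleR r x"
    and norm_scaleC: "norm (scaleC a x) = cmod a * norm x"
    and mult_scaleC_left: "scaleC a x * y = scaleC a (x * y)"
    and mult_scaleC_right: "x * scaleC a y = scaleC a (x * y)"

definition ultrafilter :: "'i filter \<Rightarrow> bool" where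
  "ultrafilter F \<longleftrightarrow> F \<noteq> bot \<and> (\<forall>P. eventually P F \<or> eventually (\<lambda>x. \<not> P x) F)"

definition nonprincipal :: "'i filter \<Rightarrow> bool" where
  "nonprincipal F \<longleftrightarrow> (\<forall>k. \<not> eventually (\<lambda>x. x = k) F)"

definition division_ring :: "('a, 'b) ring_scheme \<Rightarrow> bool" where
  "division_ring R \<longleftrightarrow> ring R \<and> \<one>\<^bsub>R\<^esub> \<noteq> \<zero>\<^bsub>R\<^esub> \<and>
     (\<forall>a \<in> carrier R. a \<noteq> \<zero>\<^bsub>R\<^esub> \<longrightarrow> a \<in> Units R)"

definition purely_infinite :: "('a, 'b) ring_scheme \<Rightarrow> bool" where
  "purely_infinite R \<longleftrightarrow> \<not> division_ring R \<and>
     (\<forall>a \<in> carrier R. a \<noteq> \<zero>\<^bsub>R\<^esub> \<longrightarrow>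
        (\<exists>b \<in> carrier R. \<exists>c \<in> carrier R. b \<otimes>\<^bsub>R\<^esub> a \<otimes>\<^bsub>R\<^esub> c = \<one>\<^bsub>R\<^esub>))"

definition univ_ring :: "'a::ring_1 ring" where
  "univ_ring = \<lparr>carrier = UNIV, monoid.mult = (*), one = 1, zero = 0, add = (+)\<rparr>"

definition ell_infty :: "(nat \<Rightarrow> 'a::real_normed_algebra_1) ring" where
  "ell_infty = \<lparr>carrier = {x. bounded (range x)},
      monoid.mult = (\<lambda>x y n. x n * y n), one = (\<lambda>n. 1),
      zero = (\<lambda>n. 0), add = (\<lambda>x y n. x n + y n)\<rparr>"

definition c_U :: "nat filter \<Rightarrow> (nat \<Rightarrow> 'a::real_normed_algebra_1) set" where
  "c_U U = {x \<in> carrier ell_infty. ((\<lambda>n. norm (x n)) \<longlongrightarrow> 0) U}"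

definition ultrapower :: "nat filter \<Rightarrow> ((nat \<Rightarrow> 'a::real_normed_algebra_1) set) ring" where
  "ultrapower U = ell_infty Quot c_U U"

end

theory Submission
  imports Defs
begin

lemma ell_carrier: "(x \<in> carrier (ell_infty :: (nat \<Rightarrow> 'a::real_normed_algebra_1) ring)) \<longleftrightarrow> (\<exists>B. \<forall>n. norm (x n) \<le> B)"
  by (auto simp: ell_infty_def bounded_iff)

lemma ell_ops:
  "x \<otimes>\<^bsub>(ell_infty :: (nat \<Rightarrow> 'a::real_normed_algebra_1) ring)\<^esub> y = (\<lambda>n. x n * y n)"
  "x \<oplus>\<^bsub>(ell_infty :: (nat \<Rightarrow> 'a::real_normed_algebra_1) ring)\<^esub> y = (\<lambda>n. x n + y n)"
  "\<one>\<^bsub>(ell_infty :: (nat \<Rightarrow> 'a::real_normed_algebra_1) ring)\<^esub> = (\<lambda>n. 1)"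
  "\<zero>\<^bsub>(ell_infty :: (nat \<Rightarrow> 'a::real_normed_algebra_1) ring)\<^esub> = (\<lambda>n. 0)"
  by (simp_all add: ell_infty_def)

lemma bnd_add: "\<forall>n. norm (x n) \<le> (B::real) \<Longrightarrow> \<forall>n. norm (y n) \<le> C \<Longrightarrow> \<forall>n. norm (x n + y n :: 'a::real_normed_vector) \<le> B + C"
  by (meson add_mono norm_triangle_ineq order_trans)

lemma bnd_mult: "\<forall>n. norm (x n) \<le> (B::real) \<Longrightarrow> \<forall>n. norm (y n) \<le> C \<Longrightarrow> \<forall>n. norm (x n * y n :: 'a::real_normed_algebra) \<le> B * C"
proof
  fix n assume a: "\<forall>n. norm (x n) \<le> (B::real)" "\<forall>n. norm (y n) \<le> C"
  have "norm (x n * y n) \<le> norm (x n) * norm (y n)" by (rule norm_mult_ineq)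
  also have "\<dots> \<le> B * C" using a by (meson mult_mono norm_ge_zero order_trans)
  finally show "norm (x n * y n) \<le> B * C" .
qed

lemma bnd_add': "\<forall>n. norm (x n) \<le> (B::real) \<Longrightarrow> \<forall>n. norm (y n) \<le> C \<Longrightarrow> \<exists>D. \<forall>n. norm (x n + y n :: 'a::real_normed_vector) \<le> D"
  using bnd_add by blast
lemma bnd_mult': "\<forall>n. norm (x n) \<le> (B::real) \<Longrightarrow> \<forall>n. norm (y n) \<le> C \<Longrightarrow> \<exists>D. \<forall>n. norm (x n * y n :: 'a::real_normed_algebra) \<le> D"
  using bnd_mult by blast

lemma ring_ell: "ring (ell_infty :: (nat \<Rightarrow> 'a::real_normed_algebra_1) ring)"
proof (rule ringI)
  show "abelian_group (ell_infty :: (nat \<Rightarrow> 'a::real_normed_algebra_1) ring)"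
  proof (rule abelian_groupI)
    fix x :: "nat \<Rightarrow> 'a" assume "x \<in> carrier ell_infty"
    then obtain B where "\<forall>n. norm (x n) \<le> B" by (auto simp: ell_carrier)
    then show "\<exists>y\<in>carrier ell_infty. y \<oplus>\<^bsub>ell_infty\<^esub> x = \<zero>\<^bsub>ell_infty\<^esub>"
      by (intro bexI[of _ "\<lambda>n. - x n"]) (auto simp: ell_carrier ell_ops)
  qed (auto simp: ell_carrier ell_ops algebra_simps intro: bnd_add')
  show "monoid (ell_infty :: (nat \<Rightarrow> 'a::real_normed_algebra_1) ring)"
  proof (rule monoidI)
    show "\<one>\<^bsub>ell_infty\<^esub> \<in> carrier (ell_infty :: (nat \<Rightarrow> 'a::real_normed_algebra_1) ring)"
      by (auto simp: ell_carrier ell_ops)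
  qed (auto simp: ell_carrier ell_ops algebra_simps intro: bnd_mult')
qed (auto simp: ell_carrier ell_ops algebra_simps)

lemma zero_bound:
  assumes "((\<lambda>n. norm (a n)) \<longlongrightarrow> 0) U" "\<forall>n. norm (b n) \<le> C * norm (a n) + D * norm (e n)"
    "((\<lambda>n. norm (e n)) \<longlongrightarrow> 0) U"
  shows "((\<lambda>n. norm (b n)) \<longlongrightarrow> 0) U"
proof (rule tendsto_sandwich[of "\<lambda>n. 0" _ _ "\<lambda>n. C * norm (a n) + D * norm (e n)"])
  have "((\<lambda>n. C * norm (a n) + D * norm (e n)) \<longlongrightarrow> C * 0 + D * 0) U"
    by (intro tendsto_intros assms)
  then show "((\<lambda>n. C * norm (a n) + D * norm (e n)) \<longlongrightarrow> 0) U" by simp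
qed (use assms in auto)

lemma ell_neg: "x \<in> carrier (ell_infty :: (nat \<Rightarrow> 'a::real_normed_algebra_1) ring) \<Longrightarrow> \<ominus>\<^bsub>ell_infty\<^esub> x = (\<lambda>n. - x n)"
proof -
  interpret R: ring "ell_infty :: (nat \<Rightarrow> 'a::real_normed_algebra_1) ring" by (rule ring_ell)
  assume x: "x \<in> carrier (ell_infty :: (nat \<Rightarrow> 'a::real_normed_algebra_1) ring)"
  show ?thesis
    using x by (intro R.minus_equality) (auto simp: ell_carrier ell_ops)
qed

lemma ideal_cU: "ideal (c_U U) (ell_infty :: (nat \<Rightarrow> 'a::real_normed_algebra_1) ring)"
proof -
  interpret R: ring "ell_infty :: (nat \<Rightarrow> 'a::real_normed_algebra_1) ring" by (rule ring_ell)
  show ?thesis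
  proof (rule idealI[OF ring_ell])
    show "subgroup (c_U U) (add_monoid (ell_infty :: (nat \<Rightarrow> 'a::real_normed_algebra_1) ring))"
    proof (rule R.add.subgroupI)
      show "c_U U \<subseteq> carrier (ell_infty :: (nat \<Rightarrow> 'a::real_normed_algebra_1) ring)"
        by (auto simp: c_U_def)
      have "(\<lambda>n. 0) \<in> c_U U" by (auto simp: c_U_def ell_carrier)
      then show "c_U U \<noteq> {}" by blast
    next
      fix a assume "a \<in> (c_U U :: (nat \<Rightarrow> 'a) set)"
      then show "\<ominus>\<^bsub>(ell_infty :: (nat \<Rightarrow> 'a::real_normed_algebra_1) ring)\<^esub> a \<in> c_U U"
        by (auto simp: c_U_def ell_neg ell_carrier)
    next
      fix a b :: "nat \<Rightarrow> 'a" assume "a \<in> c_U U" "b \<in> c_U U"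
      then show "a \<oplus>\<^bsub>(ell_infty :: (nat \<Rightarrow> 'a::real_normed_algebra_1) ring)\<^esub> b \<in> c_U U"
        unfolding c_U_def
      proof (auto simp: ell_carrier ell_ops intro: bnd_add')
        assume "((\<lambda>n. norm (a n)) \<longlongrightarrow> 0) U" "((\<lambda>n. norm (b n)) \<longlongrightarrow> 0) U"
        then show "((\<lambda>n. norm (a n + b n)) \<longlongrightarrow> 0) U"
          using zero_bound[where C=1 and D=1 and a=a and e=b and b="\<lambda>n. a n + b n"] by (simp add: norm_triangle_ineq)
      qed
    qed
  next
    fix a x assume "a \<in> (c_U U :: (nat \<Rightarrow> 'a) set)" "x \<in> carrier (ell_infty :: (nat \<Rightarrow> 'a::real_normed_algebra_1) ring)"
    then obtain B where B: "\<forall>n. norm (x n) \<le> B" and a: "a \<in> carrier ell_infty" "((\<lambda>n. norm (a n)) \<longlongrightarrow> 0) U"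
      by (auto simp: c_U_def ell_carrier)
    have b1: "\<forall>n. norm (x n * a n) \<le> B * norm (a n) + 0 * norm (a n)"
      using B by (metis add_0_right mult_right_mono mult_zero_left norm_ge_zero norm_mult_ineq order_trans)
    have b2: "\<forall>n. norm (a n * x n) \<le> B * norm (a n) + 0 * norm (a n)"
      using B by (metis add_0_right mult.commute mult_left_mono mult_zero_left norm_ge_zero norm_mult_ineq order_trans)
    show "x \<otimes>\<^bsub>ell_infty\<^esub> a \<in> c_U U" "a \<otimes>\<^bsub>ell_infty\<^esub> x \<in> c_U U"
      using a B b1 b2 zero_bound[OF a(2) b1 a(2)] zero_bound[OF a(2) b2 a(2)]
      by (auto simp: c_U_def ell_ops ell_carrier intro: bnd_mult')
  qed
qed

lemma neumann:
  fixes x :: "'a::{banach, real_normed_algebra_1}"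
  assumes "norm (1 - x) < 1"
  shows "\<exists>w. x * w = 1"
proof -
  define y where "y = 1 - x"
  have ny: "norm y < 1" using assms by (simp add: y_def)
  have sg: "summable (\<lambda>k. norm y ^ k)" using ny by (intro summable_geometric) simp
  have sm: "summable (\<lambda>k. y ^ k)"
    by (rule summable_comparison_test'[OF sg, of 0]) (simp add: norm_power_ineq)
  define s where "s = suminf (\<lambda>k. y ^ k)"
  have "y * s = (\<Sum>k. y ^ Suc k)"
    unfolding s_def using suminf_mult[OF sm, of y] by simp
  also have "\<dots> = s - 1" unfolding s_def using suminf_split_head[OF sm] by simp
  finally have "y * s = s - 1" .
  then have "x * s = 1" unfolding y_def by (simp add: algebra_simps)
  then show ?thesis by blast
qed

lemma divring_aux:
  fixes b x c w :: "'a::ring_1"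
  assumes inv: "\<forall>a::'a. a \<noteq> 0 \<longrightarrow> (\<exists>y. a * y = 1 \<and> y * a = 1)"
    and e: "b * x * c * w = 1" and one: "(1::'a) \<noteq> 0"
  shows "x * (c * w * b) = 1 \<and> (c * w * b) * x = 1"
proof -
  have "b \<noteq> 0" using e one by auto
  then obtain b' where b': "b * b' = 1" "b' * b = 1" using inv by blast
  have "x * c * w = b'" using e b' by (metis mult.assoc mult_1_left mult_1_right)
  then have xy: "x * (c * w * b) = 1" using b' by (metis mult.assoc)
  have "x \<noteq> 0" using xy one by auto
  then obtain x' where x': "x * x' = 1" "x' * x = 1" using inv by blast
  have "c * w * b = x'" using xy x' by (metis mult.assoc mult_1_left mult_1_right)
  then show ?thesis using xy x' by simp
qed

lemma Q_carrier: "X \<in> carrier (ultrapower U :: ((nat \<Rightarrow> 'a::real_normed_algebra_1) set) ring) \<longleftrightarrow>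
   (\<exists>x\<in>carrier (ell_infty :: (nat \<Rightarrow> 'a) ring). X = c_U U +>\<^bsub>ell_infty\<^esub> x)"
  by (auto simp: ultrapower_def FactRing_def A_RCOSETS_def')

lemma Q_one: "\<one>\<^bsub>(ultrapower U :: ((nat \<Rightarrow> 'a::real_normed_algebra_1) set) ring)\<^esub> = c_U U +>\<^bsub>ell_infty\<^esub> (\<lambda>n. (1::'a))"
  by (simp add: ultrapower_def FactRing_def ell_ops)

lemma Q_zero: "\<zero>\<^bsub>(ultrapower U :: ((nat \<Rightarrow> 'a::real_normed_algebra_1) set) ring)\<^esub> = c_U U"
  by (simp add: ultrapower_def FactRing_def)

lemma Q_mult:
  assumes "x \<in> carrier (ell_infty :: (nat \<Rightarrow> 'a::real_normed_algebra_1) ring)" "y \<in> carrier (ell_infty :: (nat \<Rightarrow> 'a) ring)"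
  shows "(c_U U +>\<^bsub>ell_infty\<^esub> x) \<otimes>\<^bsub>(ultrapower U :: ((nat \<Rightarrow> 'a) set) ring)\<^esub> (c_U U +>\<^bsub>ell_infty\<^esub> y)
     = c_U U +>\<^bsub>ell_infty\<^esub> (\<lambda>n. x n * y n)"
  using ideal.rcoset_mult_add[OF ideal_cU assms] by (simp add: ultrapower_def FactRing_def ell_ops)

lemma coset_zero:
  assumes "x \<in> carrier (ell_infty :: (nat \<Rightarrow> 'a::real_normed_algebra_1) ring)"
  shows "(c_U U +>\<^bsub>ell_infty\<^esub> x = c_U U) \<longleftrightarrow> x \<in> c_U U"
proof -
  interpret I: ideal "c_U U" "ell_infty :: (nat \<Rightarrow> 'a) ring" by (rule ideal_cU)
  show ?thesis using I.a_rcos_const I.a_rcos_self[OF assms] by auto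
qed

lemma coset_eq:
  assumes "x \<in> carrier (ell_infty :: (nat \<Rightarrow> 'a::real_normed_algebra_1) ring)" "y \<in> carrier (ell_infty :: (nat \<Rightarrow> 'a) ring)"
    and "c_U U +>\<^bsub>ell_infty\<^esub> x = c_U U +>\<^bsub>ell_infty\<^esub> y"
  shows "\<exists>h\<in>c_U U. x = (\<lambda>n. h n + y n)"
proof -
  interpret I: ideal "c_U U" "ell_infty :: (nat \<Rightarrow> 'a) ring" by (rule ideal_cU)
  have "x \<in> c_U U +>\<^bsub>ell_infty\<^esub> y" using I.a_rcos_self[OF assms(1)] assms(3) by simp
  then show ?thesis by (auto simp: a_r_coset_def' ell_ops)
qed

lemma coset_shift:
  assumes "h \<in> c_U U" "y \<in> carrier (ell_infty :: (nat \<Rightarrow> 'a::real_normed_algebra_1) ring)"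
  shows "c_U U +>\<^bsub>ell_infty\<^esub> (\<lambda>n. h n + y n) = c_U U +>\<^bsub>ell_infty\<^esub> y"
proof -
  interpret I: ideal "c_U U" "ell_infty :: (nat \<Rightarrow> 'a) ring" by (rule ideal_cU)
  have "(\<lambda>n. h n + y n) \<in> c_U U +>\<^bsub>ell_infty\<^esub> y" using assms by (auto simp: a_r_coset_def' ell_ops)
  then show ?thesis using I.a_repr_independence[OF _ assms(2) I.a_subgroup] by simp
qed

lemma ell_mult_closed:
  "x \<in> carrier (ell_infty :: (nat \<Rightarrow> 'a::real_normed_algebra_1) ring) \<Longrightarrow> y \<in> carrier (ell_infty :: (nat \<Rightarrow> 'a) ring)
   \<Longrightarrow> (\<lambda>n. x n * y n) \<in> carrier (ell_infty :: (nat \<Rightarrow> 'a) ring)"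
  by (auto simp: ell_carrier intro: bnd_mult')

lemma ell_one_closed: "(\<lambda>n. 1) \<in> carrier (ell_infty :: (nat \<Rightarrow> 'a::real_normed_algebra_1) ring)"
  by (auto simp: ell_carrier)

lemma lift:
  assumes PI: "purely_infinite (ultrapower U :: ((nat \<Rightarrow> 'a::real_normed_algebra_1) set) ring)"
   and x: "x \<in> carrier (ell_infty :: (nat\<Rightarrow>'a) ring)" and nz: "x \<notin> c_U U"
  shows "\<exists>b c h. b \<in> carrier (ell_infty :: (nat\<Rightarrow>'a) ring) \<and> c \<in> carrier (ell_infty :: (nat\<Rightarrow>'a) ring)
     \<and> h \<in> c_U U \<and> (\<forall>n. b n * x n * c n = h n + 1)"
proof -
  let ?Q = "ultrapower U :: ((nat \<Rightarrow> 'a) set) ring"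
  define X where "X = c_U U +>\<^bsub>ell_infty\<^esub> x"
  have Xc: "X \<in> carrier ?Q" using x by (auto simp: Q_carrier X_def)
  have Xnz: "X \<noteq> \<zero>\<^bsub>?Q\<^esub>" using coset_zero[OF x, of U] nz by (simp add: Q_zero X_def)
  from PI Xc Xnz obtain B C where BC: "B \<in> carrier ?Q" "C \<in> carrier ?Q" "B \<otimes>\<^bsub>?Q\<^esub> X \<otimes>\<^bsub>?Q\<^esub> C = \<one>\<^bsub>?Q\<^esub>"
    unfolding purely_infinite_def by blast
  from BC(1) obtain b where b: "b \<in> carrier (ell_infty :: (nat\<Rightarrow>'a) ring)" "B = c_U U +>\<^bsub>ell_infty\<^esub> b"
    by (auto simp: Q_carrier)
  from BC(2) obtain c where c: "c \<in> carrier (ell_infty :: (nat\<Rightarrow>'a) ring)" "C = c_U U +>\<^bsub>ell_infty\<^esub> c"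
    by (auto simp: Q_carrier)
  have bx: "(\<lambda>n. b n * x n) \<in> carrier (ell_infty :: (nat\<Rightarrow>'a) ring)" using ell_mult_closed[OF b(1) x] .
  have bxc: "(\<lambda>n. b n * x n * c n) \<in> carrier (ell_infty :: (nat\<Rightarrow>'a) ring)"
    using ell_mult_closed[OF bx c(1)] by simp
  have "c_U U +>\<^bsub>ell_infty\<^esub> (\<lambda>n. b n * x n * c n) = c_U U +>\<^bsub>ell_infty\<^esub> (\<lambda>n. (1::'a))"
    using BC(3) unfolding b(2) c(2) X_def Q_one
    by (simp add: Q_mult[OF b(1) x] Q_mult[OF bx c(1)])
  from coset_eq[OF bxc ell_one_closed this] show ?thesis using b(1) c(1) by metis
qed

lemma ell_bound: "x \<in> carrier (ell_infty :: (nat \<Rightarrow> 'a::real_normed_algebra_1) ring) \<Longrightarrow> \<exists>B\<ge>0. \<forall>n. norm (x n) \<le> B"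
  by (auto simp: ell_carrier) (meson norm_ge_zero order_trans)

lemma norm3:
  fixes a b c :: "'a::real_normed_algebra"
  assumes "norm a \<le> A" "norm b \<le> B" "norm c \<le> C"
  shows "norm (a * b * c) \<le> A * B * C"
proof -
  have "norm (a * b * c) \<le> norm (a * b) * norm c" by (rule norm_mult_ineq)
  also have "\<dots> \<le> (norm a * norm b) * norm c" by (simp add: mult_right_mono norm_mult_ineq)
  also have "\<dots> \<le> A * B * C" using assms
    by (meson mult_mono norm_ge_zero order_trans zero_le_mult_iff)
  finally show ?thesis .
qed

lemma inv_bound:
  fixes w h :: "'a::real_normed_algebra_1"
  assumes "w * (h + 1) = 1" "norm h < 1/2"
  shows "norm w \<le> 2"
proof -
  have "w = 1 - w * h" using assms(1) by (simp add: algebra_simps)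
  then have "norm w \<le> norm (1::'a) + norm (w * h)" by (metis norm_triangle_ineq4)
  also have "\<dots> \<le> 1 + norm w * norm h" by (simp add: norm_mult_ineq)
  also have "\<dots> \<le> 1 + norm w * (1/2)" using assms(2) by (intro add_left_mono mult_left_mono) auto
  finally show ?thesis by simp
qed

theorem corollary2p4:
  fixes U :: "nat filter"
  assumes "ultrafilter U"
    and "nonprincipal U"
    and "purely_infinite (ultrapower U :: ((nat \<Rightarrow> 'a::complex_banach_algebra_1) set) ring)"
  shows "purely_infinite (univ_ring :: 'a ring)"
proof -
  let ?Q = "ultrapower U :: ((nat \<Rightarrow> 'a) set) ring"
  have Ubot: "U \<noteq> bot" using assms(1) by (simp add: ultrafilter_def)
  have ev_small: "eventually (\<lambda>n. norm (h n) < r) U" if "h \<in> c_U U" "r > 0" for h :: "nat \<Rightarrow> 'a" and r :: real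
    using that by (auto simp: c_U_def intro: order_tendstoD(2))
  have part2: "\<forall>a \<in> carrier (univ_ring :: 'a ring). a \<noteq> \<zero>\<^bsub>univ_ring\<^esub> \<longrightarrow>
        (\<exists>b \<in> carrier univ_ring. \<exists>c \<in> carrier univ_ring. b \<otimes>\<^bsub>univ_ring\<^esub> a \<otimes>\<^bsub>univ_ring\<^esub> c = \<one>\<^bsub>univ_ring\<^esub>)"
  proof (intro ballI impI)
    fix a :: 'a assume "a \<in> carrier univ_ring" "a \<noteq> \<zero>\<^bsub>univ_ring\<^esub>"
    then have a0: "a \<noteq> 0" by (simp add: univ_ring_def)
    have xc: "(\<lambda>n. a) \<in> carrier (ell_infty :: (nat\<Rightarrow>'a) ring)" by (auto simp: ell_carrier)
    have nz: "(\<lambda>n. a) \<notin> c_U U"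
    proof
      assume "(\<lambda>n. a) \<in> c_U U"
      then have "((\<lambda>n. norm a) \<longlongrightarrow> 0) U" by (simp add: c_U_def)
      then have "norm a = 0" using tendsto_const_iff[of U "norm a" 0] Ubot by simp
      then show False using a0 by simp
    qed
    obtain b c h where bch: "h \<in> c_U U" "\<forall>n. b n * a * c n = h n + 1"
      using lift[OF assms(3) xc nz] by auto
    obtain n where "norm (h n) < 1" using eventually_happens'[OF Ubot ev_small[OF bch(1), of 1]] by auto
    then have "norm (1 - b n * a * c n) < 1" using bch(2) by simp
    then obtain w where "b n * a * c n * w = 1" using neumann by blast
    then show "\<exists>b \<in> carrier univ_ring. \<exists>c \<in> carrier univ_ring. b \<otimes>\<^bsub>univ_ring\<^esub> a \<otimes>\<^bsub>univ_ring\<^esub> c = \<one>\<^bsub>univ_ring\<^esub>"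
      by (intro bexI[of _ "b n"] bexI[of _ "c n * w"]) (auto simp: univ_ring_def mult.assoc)
  qed
  have part1: "\<not> division_ring (univ_ring :: 'a ring)"
  proof
    assume D: "division_ring (univ_ring :: 'a ring)"
    have one: "(1::'a) \<noteq> 0" using D by (simp add: division_ring_def univ_ring_def)
    have inv: "\<forall>a::'a. a \<noteq> 0 \<longrightarrow> (\<exists>y. a * y = 1 \<and> y * a = 1)"
      using D by (auto simp: division_ring_def univ_ring_def Units_def)
    have "division_ring ?Q"
      unfolding division_ring_def
    proof (intro conjI ballI impI)
      show "ring ?Q" by (simp add: ultrapower_def ideal.quotient_is_ring[OF ideal_cU])
      have "(\<lambda>n. 1::'a) \<notin> c_U U"
      proof
        assume "(\<lambda>n. 1::'a) \<in> c_U U"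
        then have "((\<lambda>n. 1::real) \<longlongrightarrow> 0) U" by (simp add: c_U_def)
        then show False using tendsto_const_iff[of U "1::real" 0] Ubot by simp
      qed
      then show "\<one>\<^bsub>?Q\<^esub> \<noteq> \<zero>\<^bsub>?Q\<^esub>"
        using coset_zero[OF ell_one_closed[where 'a='a], of U] by (simp add: Q_one Q_zero)
    next
      fix X assume X: "X \<in> carrier ?Q" "X \<noteq> \<zero>\<^bsub>?Q\<^esub>"
      from X(1) obtain x where x: "x \<in> carrier (ell_infty :: (nat\<Rightarrow>'a) ring)" "X = c_U U +>\<^bsub>ell_infty\<^esub> x"
        by (auto simp: Q_carrier)
      have xnz: "x \<notin> c_U U" using X(2) coset_zero[OF x(1), of U] x(2) by (simp add: Q_zero)
      obtain b c h where bch: "b \<in> carrier (ell_infty :: (nat\<Rightarrow>'a) ring)" "c \<in> carrier (ell_infty :: (nat\<Rightarrow>'a) ring)"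
        "h \<in> c_U U" "\<forall>n. b n * x n * c n = h n + 1"
        using lift[OF assms(3) x(1) xnz] by auto
      obtain Bb where Bb: "Bb \<ge> 0" "\<forall>n. norm (b n) \<le> Bb" using ell_bound[OF bch(1)] by auto
      obtain Bc where Bc: "Bc \<ge> 0" "\<forall>n. norm (c n) \<le> Bc" using ell_bound[OF bch(2)] by auto
      obtain Bx where Bx: "Bx \<ge> 0" "\<forall>n. norm (x n) \<le> Bx" using ell_bound[OF x(1)] by auto
      define P where "P n \<longleftrightarrow> norm (h n) < 1/2" for n
      have evP: "eventually P U" unfolding P_def by (rule ev_small[OF bch(3)]) simp
      have "\<forall>n. \<exists>w. P n \<longrightarrow> (b n * x n * c n * w = 1 \<and> w * (b n * x n * c n) = 1 \<and> norm w \<le> 2)"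
      proof
        fix n
        show "\<exists>w. P n \<longrightarrow> (b n * x n * c n * w = 1 \<and> w * (b n * x n * c n) = 1 \<and> norm w \<le> 2)"
        proof (cases "P n")
          case True
          have "h n + 1 \<noteq> 0"
          proof
            assume "h n + 1 = 0"
            then have "h n = - 1" by (simp add: eq_neg_iff_add_eq_0)
            then show False using True by (simp add: P_def)
          qed
          then obtain w where w: "(h n + 1) * w = 1" "w * (h n + 1) = 1" using inv by blast
          have "norm w \<le> 2" using inv_bound[OF w(2)] True by (simp add: P_def)
          then show ?thesis using w bch(4) by metis
        qed auto
      qed
      then obtain w where w: "\<forall>n. P n \<longrightarrow> (b n * x n * c n * w n = 1 \<and> w n * (b n * x n * c n) = 1 \<and> norm (w n) \<le> 2)"
        by metis
      define y where "y n = (if P n then c n * w n * b n else 0)" for n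
      have ybd: "\<forall>n. norm (y n) \<le> Bc * 2 * Bb"
      proof
        fix n show "norm (y n) \<le> Bc * 2 * Bb"
          using w Bb Bc by (auto simp: y_def intro!: norm3)
      qed
      have yc: "y \<in> carrier (ell_infty :: (nat\<Rightarrow>'a) ring)" using ybd by (auto simp: ell_carrier)
      have inv_ev: "P n \<Longrightarrow> x n * y n = 1 \<and> y n * x n = 1" for n
        using divring_aux[OF inv _ one, of "b n" "x n" "c n" "w n"] w by (simp add: y_def)
      have xy_bd: "\<forall>n. norm (x n * y n - 1) \<le> Bx * (Bc * 2 * Bb) + 1"
      proof
        fix n
        have "norm (x n * y n - 1) \<le> norm (x n * y n) + norm (1::'a)" by (rule norm_triangle_ineq4)
        also have "\<dots> \<le> norm (x n) * norm (y n) + 1" by (simp add: norm_mult_ineq)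
        also have "\<dots> \<le> Bx * (Bc * 2 * Bb) + 1" using Bx ybd
          by (intro add_right_mono mult_mono) auto
        finally show "norm (x n * y n - 1) \<le> Bx * (Bc * 2 * Bb) + 1" .
      qed
      have yx_bd: "\<forall>n. norm (y n * x n - 1) \<le> (Bc * 2 * Bb) * Bx + 1"
      proof
        fix n
        have "norm (y n * x n - 1) \<le> norm (y n * x n) + norm (1::'a)" by (rule norm_triangle_ineq4)
        also have "\<dots> \<le> norm (y n) * norm (x n) + 1" by (simp add: norm_mult_ineq)
        also have "\<dots> \<le> (Bc * 2 * Bb) * Bx + 1" using Bx ybd Bb Bc
          by (intro add_right_mono mult_mono) auto
        finally show "norm (y n * x n - 1) \<le> (Bc * 2 * Bb) * Bx + 1" .
      qed
      have e1: "(\<lambda>n. x n * y n - 1) \<in> c_U U"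
      proof -
        have "eventually (\<lambda>n. norm (x n * y n - 1) = 0) U"
          using evP by (rule eventually_mono) (simp add: inv_ev)
        then have "((\<lambda>n. norm (x n * y n - 1)) \<longlongrightarrow> 0) U" by (rule tendsto_eventually)
        then show ?thesis using xy_bd by (auto simp: c_U_def ell_carrier)
      qed
      have e2: "(\<lambda>n. y n * x n - 1) \<in> c_U U"
      proof -
        have "eventually (\<lambda>n. norm (y n * x n - 1) = 0) U"
          using evP by (rule eventually_mono) (simp add: inv_ev)
        then have "((\<lambda>n. norm (y n * x n - 1)) \<longlongrightarrow> 0) U" by (rule tendsto_eventually)
        then show ?thesis using yx_bd by (auto simp: c_U_def ell_carrier)
      qed
      define Y where "Y = c_U U +>\<^bsub>ell_infty\<^esub> y"
      have Yc: "Y \<in> carrier ?Q" using yc by (auto simp: Q_carrier Y_def)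
      have "X \<otimes>\<^bsub>?Q\<^esub> Y = c_U U +>\<^bsub>ell_infty\<^esub> (\<lambda>n. (x n * y n - 1) + 1)"
        unfolding x(2) Y_def Q_mult[OF x(1) yc] by simp
      also have "\<dots> = \<one>\<^bsub>?Q\<^esub>" unfolding Q_one by (rule coset_shift[OF e1 ell_one_closed])
      finally have XY: "X \<otimes>\<^bsub>?Q\<^esub> Y = \<one>\<^bsub>?Q\<^esub>" .
      have "Y \<otimes>\<^bsub>?Q\<^esub> X = c_U U +>\<^bsub>ell_infty\<^esub> (\<lambda>n. (y n * x n - 1) + 1)"
        unfolding x(2) Y_def Q_mult[OF yc x(1)] by simp
      also have "\<dots> = \<one>\<^bsub>?Q\<^esub>" unfolding Q_one by (rule coset_shift[OF e2 ell_one_closed])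
      finally have YX: "Y \<otimes>\<^bsub>?Q\<^esub> X = \<one>\<^bsub>?Q\<^esub>" .
      show "X \<in> Units ?Q" using X(1) Yc XY YX unfolding Units_def by blast
    qed
    with assms(3) show False by (simp add: purely_infinite_def)
  qed
  show ?thesis unfolding purely_infinite_def using part1 part2 by blast
qed

end
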